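(* Let $\nu$, $f$, $\Phi$, $\mathcal{I}$, $\zeta_n$ and $\zeta$ be as in the context. Then for each $a\in(0,1]$ and each $p\in\mathcal{I}\cap(0,1]$, $$\mathbf{E}\sup_{x\in[a,1]}|\zeta(x)-\zeta_n(x)|^p\to0\quad\text{as } n\to\infty.$$
   Context: Let $\mathcal{G}$ be the space of Lipschitz functions $f:\mathbb{R}\to\mathbb{R}$ with the norm $|f(0)|+L_f$, where $L_f=\sup_{x\neq y}|f(y)-f(x)|/|x-y|$, and its Borel $\sigma$-algebra. Let $\nu$ be a probability measure on $\mathcal{G}$, $f$ a random element with distribution $\nu$, and assume $\mathbf{E}L_f<\infty$, $\mathbf{E}\log L_f<0$ and $\mathbf{E}|f(z_0)-z_0|<\infty$ for a fixed $z_0\in\mathbb{R}$. Let $\Phi(p)=\mathbf{E}L_f^p$ and $\mathcal{I}=\{p>0:\Phi(p)<1\}$. Let $(f_i)_{i\ge1}$ be i.i.d. with distribution $\nu$ and, independently, $(U_i)_{i\ge1}$ i.i.d. uniform on $[0,1]$. For $x\in(0,1]$ let $f_{i,x}=f_i$ if $U_i\le x$ and $f_{i,x}=\mathrm{Id}$ (identity) otherwise, $\zeta_n(x)=f_{1,x}\circ\cdots\circ f_{n,x}(z_0)$, and $\zeta(x)=\lim_{n\to\infty}\zeta_n(x)$ (the a.s. limit, which exists). *)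

theory Defs
  imports "HOL-Probability.Probability"
begin

definition LipG :: "(real \<Rightarrow> real) set" where
  "LipG = {f. \<exists>C. C-lipschitz_on UNIV f}"

definition Lip :: "(real \<Rightarrow> real) \<Rightarrow> real" where
  "Lip f = (SUP xy \<in> {(x, y). x \<noteq> y}. \<bar>f (snd xy) - f (fst xy)\<bar> / \<bar>fst xy - snd xy\<bar>)"

definition lip_norm :: "(real \<Rightarrow> real) \<Rightarrow> real" where
  "lip_norm f = \<bar>f 0\<bar> + Lip f"

definition lip_open :: "(real \<Rightarrow> real) set \<Rightarrow> bool" where
  "lip_open U \<longleftrightarrow> U \<subseteq> LipG \<and>
     (\<forall>f\<in>U. \<exists>e>0. \<forall>g\<in>LipG. lip_norm (\<lambda>x. g x - f x) < e \<longrightarrow> g \<in> U)"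

definition LipM :: "(real \<Rightarrow> real) measure" where
  "LipM = sigma LipG {U. lip_open U}"

primrec iter_comp :: "(nat \<Rightarrow> real \<Rightarrow> real) \<Rightarrow> nat \<Rightarrow> real \<Rightarrow> real" where
  "iter_comp g 0 = id"
| "iter_comp g (Suc n) = iter_comp g n \<circ> g n"

text \<open>f_{i,x}: f_i if U_i <= x, identity otherwise (indices shifted to start at 0).\<close>
definition f_sel :: "(nat \<Rightarrow> 'a \<Rightarrow> real \<Rightarrow> real) \<Rightarrow> (nat \<Rightarrow> 'a \<Rightarrow> real) \<Rightarrow> real \<Rightarrow> 'a \<Rightarrow> nat \<Rightarrow> real \<Rightarrow> real" where
  "f_sel F U x \<omega> i = (if U i \<omega> \<le> x then F i \<omega> else id)"

definition zeta_n :: "(nat \<Rightarrow> 'a \<Rightarrow> real \<Rightarrow> real) \<Rightarrow> (nat \<Rightarrow> 'a \<Rightarrow> real) \<Rightarrow> real \<Rightarrow> nat \<Rightarrow> real \<Rightarrow> 'a \<Rightarrow> real" where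
  "zeta_n F U z0 n x \<omega> = iter_comp (f_sel F U x \<omega>) n z0"

text \<open>zeta(x) = limit of zeta_n(x) (exists almost surely).\<close>
definition zeta :: "(nat \<Rightarrow> 'a \<Rightarrow> real \<Rightarrow> real) \<Rightarrow> (nat \<Rightarrow> 'a \<Rightarrow> real) \<Rightarrow> real \<Rightarrow> real \<Rightarrow> 'a \<Rightarrow> real" where
  "zeta F U z0 x \<omega> = lim (\<lambda>n. zeta_n F U z0 n x \<omega>)"

text \<open>Outer (upper) expectation; agrees with the usual expectation for measurable functions.\<close>
definition outer_nn_integral :: "'a measure \<Rightarrow> ('a \<Rightarrow> ennreal) \<Rightarrow> ennreal" where
  "outer_nn_integral M g =
     (INF h \<in> {h \<in> borel_measurable M. \<forall>\<omega>\<in>space M. g \<omega> \<le> h \<omega>}. nn_integral M h)"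

text \<open>Negative part of log L_f, with log 0 = -infinity.\<close>
definition neg_log_part :: "real \<Rightarrow> ennreal" where
  "neg_log_part L = (if L = 0 then \<infinity> else ennreal (max 0 (- ln L)))"

definition pos_log_part :: "real \<Rightarrow> ennreal" where
  "pos_log_part L = (if L = 0 then 0 else ennreal (max 0 (ln L)))"

end

theory Submission
  imports Defs
begin


lemma LipG_iff: "f \<in> LipG \<longleftrightarrow> (\<exists>C. \<forall>x y. \<bar>f y - f x\<bar> \<le> C * \<bar>x - y\<bar>)"
proof
  assume "f \<in> LipG"
  then obtain C where "C-lipschitz_on UNIV f" by (auto simp: LipG_def)
  then show "\<exists>C. \<forall>x y. \<bar>f y - f x\<bar> \<le> C * \<bar>x - y\<bar>"
    by (auto simp: lipschitz_on_def dist_real_def abs_minus_commute)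
next
  assume "\<exists>C. \<forall>x y. \<bar>f y - f x\<bar> \<le> C * \<bar>x - y\<bar>"
  then obtain C where C: "\<And>x y. \<bar>f y - f x\<bar> \<le> C * \<bar>x - y\<bar>" by blast
  have "0 \<le> C" using C[of 0 1] by simp
  then have "C-lipschitz_on UNIV f" using C
    by (auto simp: lipschitz_on_def dist_real_def abs_minus_commute)
  then show "f \<in> LipG" by (auto simp: LipG_def)
qed

lemma Lip_bdd:
  assumes "f \<in> LipG"
  shows "bdd_above ((\<lambda>xy. \<bar>f (snd xy) - f (fst xy)\<bar> / \<bar>fst xy - snd xy\<bar>) ` {(x, y). x \<noteq> y})"
proof -
  obtain C where C: "\<And>x y. \<bar>f y - f x\<bar> \<le> C * \<bar>x - y\<bar>" using assms LipG_iff by blast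
  show ?thesis
  proof (rule bdd_aboveI2)
    fix xy :: "real \<times> real" assume "xy \<in> {(x, y). x \<noteq> y}"
    then have "\<bar>fst xy - snd xy\<bar> > 0" by auto
    then show "\<bar>f (snd xy) - f (fst xy)\<bar> / \<bar>fst xy - snd xy\<bar> \<le> C"
      using C[of "fst xy" "snd xy"] by (simp add: divide_le_eq abs_minus_commute)
  qed
qed

lemma Lip_bound:
  assumes "f \<in> LipG"
  shows "\<bar>f y - f x\<bar> \<le> Lip f * \<bar>x - y\<bar>"
proof (cases "x = y")
  case False
  have "\<bar>f (snd (x,y)) - f (fst (x,y))\<bar> / \<bar>fst (x,y) - snd (x,y)\<bar> \<le> Lip f"
    unfolding Lip_def by (rule cSUP_upper[OF _ Lip_bdd[OF assms]]) (use False in auto)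
  moreover have "\<bar>x - y\<bar> > 0" using False by auto
  ultimately show ?thesis by (simp add: divide_le_eq)
qed simp

lemma Lip_least:
  assumes "\<And>x y. x \<noteq> y \<Longrightarrow> \<bar>f y - f x\<bar> \<le> C * \<bar>x - y\<bar>"
  shows "Lip f \<le> C"
  unfolding Lip_def
proof (rule cSUP_least)
  show "{(x, y). x \<noteq> (y::real)} \<noteq> {}" by (auto intro: exI[of _ 0] exI[of _ 1])
next
  fix xy :: "real \<times> real" assume "xy \<in> {(x, y). x \<noteq> y}"
  then have "\<bar>fst xy - snd xy\<bar> > 0" by auto
  then show "\<bar>f (snd xy) - f (fst xy)\<bar> / \<bar>fst xy - snd xy\<bar> \<le> C"
    using assms[of "fst xy" "snd xy"] \<open>xy \<in> _\<close> by (auto simp add: divide_le_eq)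
qed

lemma Lip_nonneg:
  assumes "f \<in> LipG" shows "0 \<le> Lip f"
proof -
  have "\<bar>f 1 - f 0\<bar> \<le> Lip f" using Lip_bound[OF assms, of 1 0] by simp
  then show ?thesis by (rule order_trans[OF abs_ge_zero])
qed

lemma LipG_diff: "f \<in> LipG \<Longrightarrow> g \<in> LipG \<Longrightarrow> (\<lambda>x. g x - f x) \<in> LipG"
proof -
  assume f: "f \<in> LipG" and g: "g \<in> LipG"
  have "\<bar>(g y - f y) - (g x - f x)\<bar> \<le> (Lip g + Lip f) * \<bar>x - y\<bar>" for x y
    using Lip_bound[OF f, of y x] Lip_bound[OF g, of y x] by (simp add: algebra_simps abs_le_iff)
  then show ?thesis unfolding LipG_iff by blast
qed

lemma Lip_diff_le:
  assumes f: "f \<in> LipG" and g: "g \<in> LipG"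
  shows "\<bar>Lip g - Lip f\<bar> \<le> Lip (\<lambda>x. g x - f x)"
proof -
  have h: "(\<lambda>x. g x - f x) \<in> LipG" "(\<lambda>x. f x - g x) \<in> LipG" using LipG_diff f g by auto
  have e: "Lip (\<lambda>x. f x - g x) = Lip (\<lambda>x. g x - f x)"
  proof -
    have "\<And>a b. \<bar>f a - g a - (f b - g b)\<bar> = \<bar>g a - f a - (g b - f b)\<bar>" by linarith
    then show ?thesis unfolding Lip_def by simp
  qed
  have 1: "Lip g \<le> Lip f + Lip (\<lambda>x. g x - f x)"
  proof (rule Lip_least)
    fix x y :: real
    have "\<bar>g y - g x\<bar> \<le> \<bar>f y - f x\<bar> + \<bar>(g y - f y) - (g x - f x)\<bar>" by linarith
    also have "\<dots> \<le> Lip f * \<bar>x - y\<bar> + Lip (\<lambda>x. g x - f x) * \<bar>x - y\<bar>"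
      using Lip_bound[OF f] Lip_bound[OF h(1), of y x] by (intro add_mono) auto
    finally show "\<bar>g y - g x\<bar> \<le> (Lip f + Lip (\<lambda>x. g x - f x)) * \<bar>x - y\<bar>" by (simp add: algebra_simps)
  qed
  have 2: "Lip f \<le> Lip g + Lip (\<lambda>x. f x - g x)"
  proof (rule Lip_least)
    fix x y :: real
    have "\<bar>f y - f x\<bar> \<le> \<bar>g y - g x\<bar> + \<bar>(f y - g y) - (f x - g x)\<bar>" by linarith
    also have "\<dots> \<le> Lip g * \<bar>x - y\<bar> + Lip (\<lambda>x. f x - g x) * \<bar>x - y\<bar>"
      using Lip_bound[OF g] Lip_bound[OF h(2), of y x] by (intro add_mono) auto
    finally show "\<bar>f y - f x\<bar> \<le> (Lip g + Lip (\<lambda>x. f x - g x)) * \<bar>x - y\<bar>" by (simp add: algebra_simps)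
  qed
  show ?thesis using 1 2 e by linarith
qed

lemma space_LipM: "space LipM = LipG"
  unfolding LipM_def by (rule space_measure_of) (auto simp: lip_open_def)

lemma sets_LipM_open: "lip_open U \<Longrightarrow> U \<in> sets LipM"
  unfolding LipM_def by (subst sets_measure_of) (auto simp: lip_open_def)

lemma lip_open_preimage:
  assumes cont: "\<And>f g. f \<in> LipG \<Longrightarrow> g \<in> LipG \<Longrightarrow> \<bar>\<Psi> g - \<Psi> f\<bar> \<le> K * lip_norm (\<lambda>x. g x - f x)"
    and K: "0 < K" and S: "open S"
  shows "lip_open (\<Psi> -` S \<inter> LipG)"
  unfolding lip_open_def
proof safe
  fix f assume f: "f \<in> LipG" "\<Psi> f \<in> S"
  then obtain e where e: "e > 0" "ball (\<Psi> f) e \<subseteq> S" using S open_contains_ball by blast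
  show "\<exists>e>0. \<forall>g\<in>LipG. lip_norm (\<lambda>x. g x - f x) < e \<longrightarrow> g \<in> \<Psi> -` S \<inter> LipG"
  proof (intro exI[of _ "e / K"] conjI ballI impI)
    show "e / K > 0" using e K by simp
    fix g assume g: "g \<in> LipG" "lip_norm (\<lambda>x. g x - f x) < e / K"
    have "K * lip_norm (\<lambda>x. g x - f x) < e" using g(2) K by (simp add: less_divide_eq mult.commute)
    then have "\<bar>\<Psi> g - \<Psi> f\<bar> < e" using cont[OF f(1) g(1)] by linarith
    then have "\<Psi> g \<in> ball (\<Psi> f) e" by (simp add: dist_real_def abs_minus_commute)
    then show "g \<in> \<Psi> -` S \<inter> LipG" using e g by auto
  qed
qed

lemma meas_LipM:
  assumes cont: "\<And>f g. f \<in> LipG \<Longrightarrow> g \<in> LipG \<Longrightarrow> \<bar>\<Psi> g - \<Psi> f\<bar> \<le> K * lip_norm (\<lambda>x. g x - f x)"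
    and K: "0 < K"
  shows "\<Psi> \<in> borel_measurable LipM"
proof (rule borel_measurableI)
  fix S :: "real set" assume "open S"
  have "lip_open (\<Psi> -` S \<inter> LipG)" by (rule lip_open_preimage[OF cont K \<open>open S\<close>])
  then show "\<Psi> -` S \<inter> space LipM \<in> sets LipM" unfolding space_LipM by (rule sets_LipM_open)
qed

lemma meas_Lip: "Lip \<in> borel_measurable LipM"
proof (rule meas_LipM[of _ 1])
  fix f g assume f: "f \<in> LipG" and g: "g \<in> LipG"
  show "\<bar>Lip g - Lip f\<bar> \<le> 1 * lip_norm (\<lambda>x. g x - f x)"
    using Lip_diff_le[OF f g] by (simp add: lip_norm_def)
qed simp

lemma meas_eval: "(\<lambda>g. g z) \<in> borel_measurable LipM"
proof (rule meas_LipM[of _ "1 + \<bar>z\<bar>"])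
  fix f g assume f: "f \<in> LipG" and g: "g \<in> LipG"
  have h: "(\<lambda>x. g x - f x) \<in> LipG" using LipG_diff f g by auto
  have b: "\<bar>(g z - f z) - (g 0 - f 0)\<bar> \<le> Lip (\<lambda>x. g x - f x) * \<bar>0 - z\<bar>"
    using Lip_bound[OF h, of z 0] by simp
  have "0 \<le> Lip (\<lambda>x. g x - f x)" using Lip_nonneg[OF h] .
  then have "\<bar>g z - f z\<bar> \<le> \<bar>g 0 - f 0\<bar> + Lip (\<lambda>x. g x - f x) * \<bar>z\<bar>" using b by simp
  also have "\<dots> \<le> (1 + \<bar>z\<bar>) * (\<bar>g 0 - f 0\<bar> + Lip (\<lambda>x. g x - f x))"
    using \<open>0 \<le> Lip _\<close> by (simp add: algebra_simps)
  finally show "\<bar>g z - f z\<bar> \<le> (1 + \<bar>z\<bar>) * lip_norm (\<lambda>x. g x - f x)" by (simp add: lip_norm_def)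
qed simp



lemma prod_mono_ennreal:
  fixes f g :: "nat \<Rightarrow> ennreal"
  shows "(\<And>i. i \<in> A \<Longrightarrow> f i \<le> g i) \<Longrightarrow> prod f A \<le> prod g A"
proof (induct A rule: infinite_finite_induct)
  case (insert x F)
  then show ?case by (simp add: mult_mono)
qed auto

lemma powr_ge_self:
  fixes t p :: real
  assumes "0 \<le> t" "t \<le> 1" "p \<le> 1"
  shows "t \<le> t powr p"
proof (cases "t = 0")
  case False
  have "t powr 1 \<le> t powr p" by (rule powr_mono') (use assms in auto)
  then show ?thesis using assms by simp
qed simp

lemma powr_add_le:
  fixes u v p :: real
  assumes u: "0 \<le> u" and v: "0 \<le> v" and p: "0 < p" "p \<le> 1"
  shows "(u + v) powr p \<le> u powr p + v powr p"
proof (cases "u + v = 0")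
  case True
  then have "u = 0" "v = 0" using u v by auto
  then show ?thesis by simp
next
  case False
  define s where "s = u + v"
  have s: "s > 0" using False u v s_def by auto
  have sp: "s powr p > 0" using s by simp
  have "u / s \<le> (u / s) powr p" by (rule powr_ge_self) (use u v s s_def p in \<open>auto simp: divide_le_eq\<close>)
  also have "\<dots> = u powr p / s powr p" using u s by (simp add: powr_divide)
  finally have 1: "u / s \<le> u powr p / s powr p" .
  have "v / s \<le> (v / s) powr p" by (rule powr_ge_self) (use u v s s_def p in \<open>auto simp: divide_le_eq\<close>)
  also have "\<dots> = v powr p / s powr p" using v s by (simp add: powr_divide)
  finally have 2: "v / s \<le> v powr p / s powr p" .
  have "1 = u / s + v / s" using s s_def by (simp add: add_divide_distrib[symmetric])
  also have "\<dots> \<le> (u powr p + v powr p) / s powr p" using 1 2 by (simp add: add_divide_distrib)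
  finally have "s powr p \<le> u powr p + v powr p" using sp by (simp add: le_divide_eq)
  then show ?thesis by (simp add: s_def)
qed

lemma powr_sum_le:
  fixes y :: "nat \<Rightarrow> real" and p :: real
  assumes "finite A" "\<And>i. 0 \<le> y i" "0 < p" "p \<le> 1"
  shows "(\<Sum>i\<in>A. y i) powr p \<le> (\<Sum>i\<in>A. y i powr p)"
  using assms(1)
proof (induct A rule: finite_induct)
  case (insert x F)
  have "(\<Sum>i\<in>insert x F. y i) powr p = (y x + (\<Sum>i\<in>F. y i)) powr p" using insert by simp
  also have "\<dots> \<le> y x powr p + (\<Sum>i\<in>F. y i) powr p"
    by (rule powr_add_le) (use assms in \<open>auto intro: sum_nonneg\<close>)
  also have "\<dots> \<le> y x powr p + (\<Sum>i\<in>F. y i powr p)" using insert by simp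
  finally show ?case using insert by simp
qed simp

lemma iter_lip:
  assumes "\<And>i y z. \<bar>g i y - g i z\<bar> \<le> l i * \<bar>y - z\<bar>" "\<And>i. 0 \<le> l i"
  shows "\<bar>iter_comp g k y - iter_comp g k z\<bar> \<le> (\<Prod>i<k. l i) * \<bar>y - z\<bar>"
proof (induct k arbitrary: y z)
  case (Suc k)
  have "\<bar>iter_comp g (Suc k) y - iter_comp g (Suc k) z\<bar> = \<bar>iter_comp g k (g k y) - iter_comp g k (g k z)\<bar>" by simp
  also have "\<dots> \<le> (\<Prod>i<k. l i) * \<bar>g k y - g k z\<bar>" by (rule Suc)
  also have "\<dots> \<le> (\<Prod>i<k. l i) * (l k * \<bar>y - z\<bar>)"
    by (rule mult_left_mono[OF assms(1)]) (use assms(2) in \<open>auto intro: prod_nonneg\<close>)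
  finally show ?case by (simp add: mult.assoc)
qed simp



theorem proposition4p6:
  fixes M :: "'a measure" and \<nu> :: "(real \<Rightarrow> real) measure"
    and F :: "nat \<Rightarrow> 'a \<Rightarrow> real \<Rightarrow> real" and U :: "nat \<Rightarrow> 'a \<Rightarrow> real"
    and z0 a p :: real
  assumes nu_prob: "prob_space \<nu>" and nu_sets: "sets \<nu> = sets LipM"
    and EL: "(\<integral>\<^sup>+ g. ennreal (Lip g) \<partial>\<nu>) < \<infinity>"
    and Elog: "(\<integral>\<^sup>+ g. pos_log_part (Lip g) \<partial>\<nu>) < (\<integral>\<^sup>+ g. neg_log_part (Lip g) \<partial>\<nu>)"
    and Ez0: "(\<integral>\<^sup>+ g. ennreal \<bar>g z0 - z0\<bar> \<partial>\<nu>) < \<infinity>"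
    and M_prob: "prob_space M"
    and indep: "prob_space.indep_vars M (\<lambda>_. LipM \<Otimes>\<^sub>M borel) (\<lambda>i \<omega>. (F i \<omega>, U i \<omega>)) UNIV"
    and distr: "\<And>i. distr M (LipM \<Otimes>\<^sub>M borel) (\<lambda>\<omega>. (F i \<omega>, U i \<omega>))
                     = \<nu> \<Otimes>\<^sub>M uniform_measure lborel {0..1::real}"
    and a: "0 < a" "a \<le> 1"
    and p: "0 < p" "p \<le> 1" "(\<integral>\<^sup>+ g. ennreal (Lip g powr p) \<partial>\<nu>) < 1"
  shows "(\<lambda>n. outer_nn_integral M
            (\<lambda>\<omega>. SUP x \<in> {a..1}. ennreal (\<bar>zeta F U z0 x \<omega> - zeta_n F U z0 n x \<omega>\<bar> powr p)))
         \<longlonglongrightarrow> 0"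
proof -
  define Unif where "Unif = uniform_measure lborel {0..1::real}"
  have "prob_space Unif" unfolding Unif_def
    by (rule prob_space_uniform_measure) auto
  interpret U: prob_space Unif by fact
  interpret N: prob_space \<nu> by (rule nu_prob)
  interpret P: prob_space M by (rule M_prob)
  have Xm[measurable]: "(\<lambda>\<omega>. (F i \<omega>, U i \<omega>)) \<in> M \<rightarrow>\<^sub>M LipM \<Otimes>\<^sub>M borel" for i
    using indep unfolding P.indep_vars_def by auto
  have Fm[measurable]: "F i \<in> M \<rightarrow>\<^sub>M LipM" for i
    using measurable_compose[OF Xm[of i] measurable_fst] by simp
  have Um[measurable]: "U i \<in> borel_measurable M" for i
    using measurable_compose[OF Xm[of i] measurable_snd] by simp
  have Fin: "\<omega> \<in> space M \<Longrightarrow> F i \<omega> \<in> LipG" for i \<omega>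
    using measurable_space[OF Fm] space_LipM by auto
  note meas_Lip[measurable]
  have evL[measurable]: "(\<lambda>g. g z0) \<in> borel_measurable LipM" by (rule meas_eval)
  have Evm[measurable]: "(\<lambda>z. fst z z0) \<in> borel_measurable (LipM \<Otimes>\<^sub>M borel)"
    by (rule measurable_compose[OF measurable_fst meas_eval])
  have EvM[measurable]: "(\<lambda>\<omega>. F i \<omega> z0) \<in> borel_measurable M" for i
    using measurable_compose[OF Fm meas_eval] by simp
  have sets_prod: "sets (\<nu> \<Otimes>\<^sub>M Unif) = sets (LipM \<Otimes>\<^sub>M borel)"
    by (rule sets_pair_measure_cong) (auto simp: nu_sets Unif_def)
  have transfer: "(\<integral>\<^sup>+\<omega>. h (F i \<omega>, U i \<omega>) \<partial>M) = (\<integral>\<^sup>+g. \<integral>\<^sup>+u. h (g, u) \<partial>Unif \<partial>\<nu>)"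
    if hm: "h \<in> borel_measurable (LipM \<Otimes>\<^sub>M borel)" for h i
  proof -
    have "(\<integral>\<^sup>+\<omega>. h (F i \<omega>, U i \<omega>) \<partial>M) = integral\<^sup>N (distr M (LipM \<Otimes>\<^sub>M borel) (\<lambda>\<omega>. (F i \<omega>, U i \<omega>))) h"
      by (rule nn_integral_distr[symmetric]) (use hm in auto)
    also have "\<dots> = integral\<^sup>N (\<nu> \<Otimes>\<^sub>M Unif) h" using distr by (simp add: Unif_def)
    also have "\<dots> = (\<integral>\<^sup>+g. \<integral>\<^sup>+u. h (g, u) \<partial>Unif \<partial>\<nu>)"
      by (rule U.nn_integral_fst[symmetric]) (use hm measurable_cong_sets[OF sets_prod refl] in auto)
    finally show ?thesis .
  qed
  define \<Phi> where "\<Phi> = enn2real (\<integral>\<^sup>+ g. ennreal (Lip g powr p) \<partial>\<nu>)"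
  have \<Phi>e: "(\<integral>\<^sup>+ g. ennreal (Lip g powr p) \<partial>\<nu>) = ennreal \<Phi>"
  proof -
    have "(\<integral>\<^sup>+ g. ennreal (Lip g powr p) \<partial>\<nu>) < \<top>" using p(3) by (rule order.strict_trans) simp
    then show ?thesis unfolding \<Phi>_def by (intro ennreal_enn2real[symmetric]) auto
  qed
  have \<Phi>0: "0 \<le> \<Phi>" unfolding \<Phi>_def by simp
  have \<Phi>1: "\<Phi> < 1" using p(3) \<Phi>e \<Phi>0 by (simp add: ennreal_less_iff ennreal_1[symmetric] del: ennreal_1)
  define Cr where "Cr = enn2real (\<integral>\<^sup>+ g. ennreal \<bar>g z0 - z0\<bar> \<partial>\<nu>)"
  have Cre: "(\<integral>\<^sup>+ g. ennreal \<bar>g z0 - z0\<bar> \<partial>\<nu>) = ennreal Cr"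
    unfolding Cr_def using Ez0 by (intro ennreal_enn2real[symmetric]) auto
  have Cr0: "0 \<le> Cr" unfolding Cr_def by simp
  define \<delta> where "\<delta> = a * (1 - \<Phi>) / 2"
  have \<delta>0: "0 < \<delta>" using a \<Phi>1 by (simp add: \<delta>_def)
  define r where "r = 1 - a * (1 - \<Phi>) + \<delta> * \<Phi>"
  have r1: "r < 1"
  proof -
    have "\<delta> * \<Phi> \<le> \<delta>" using \<delta>0 \<Phi>1 by (simp add: mult_left_le)
    moreover have "a * (1 - \<Phi>) > 0" using a \<Phi>1 by simp
    ultimately show ?thesis unfolding r_def \<delta>_def by linarith
  qed
  have r0: "0 \<le> r"
  proof -
    have "a * (1 - \<Phi>) \<le> a" using a \<Phi>0 by (intro mult_left_le) auto
    then have "a * (1 - \<Phi>) \<le> 1" using a by linarith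
    then show ?thesis unfolding r_def using \<delta>0 \<Phi>0 by (smt (verit) mult_nonneg_nonneg)
  qed
  define J where "J = {j::nat. real j * \<delta> \<le> 1 - a}"
  have finJ: "finite J"
  proof (rule finite_subset)
    show "J \<subseteq> {..nat \<lceil>(1 - a) / \<delta>\<rceil>}"
    proof
      fix j assume "j \<in> J"
      then have "real j \<le> (1 - a) / \<delta>" using \<delta>0 by (simp add: J_def pos_le_divide_eq)
      then have "real j \<le> real (nat \<lceil>(1 - a) / \<delta>\<rceil>)" by linarith
      then show "j \<in> {..nat \<lceil>(1 - a) / \<delta>\<rceil>}" by simp
    qed
  qed simp
  define c where "c j = a + real j * \<delta>" for j
  have cJ: "j \<in> J \<Longrightarrow> a \<le> c j \<and> c j \<le> 1" for j
    using \<delta>0 by (auto simp: c_def J_def)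
  define phi where "phi j g u = indicator {c j<..} u + ennreal (Lip g powr p) * indicator {..c j + \<delta>} u" for j g u
  have phim[measurable]: "(\<lambda>z. phi j (fst z) (snd z)) \<in> borel_measurable (LipM \<Otimes>\<^sub>M borel)" for j
    unfolding phi_def by measurable
  have E1: "(\<integral>\<^sup>+\<omega>. phi j (F i \<omega>) (U i \<omega>) \<partial>M) \<le> ennreal r" if j: "j \<in> J" for i j
  proof -
    have "(\<integral>\<^sup>+\<omega>. phi j (F i \<omega>) (U i \<omega>) \<partial>M) = (\<integral>\<^sup>+g. \<integral>\<^sup>+u. phi j g u \<partial>Unif \<partial>\<nu>)"
      using transfer[OF phim[of j], of i] by simp
    also have "\<dots> \<le> (\<integral>\<^sup>+g. ennreal (1 - c j) + ennreal (Lip g powr p) * ennreal (c j + \<delta>) \<partial>\<nu>)"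
    proof (rule nn_integral_mono)
      fix g
      have e1: "emeasure Unif {c j<..} = ennreal (1 - c j)"
      proof -
        have "{0..1} \<inter> {c j<..} = {c j<..1::real}" using cJ[OF j] a by auto
        then show ?thesis unfolding Unif_def using cJ[OF j] by (simp add: divide_ennreal_def)
      qed
      have e2: "emeasure Unif {..c j + \<delta>} \<le> ennreal (c j + \<delta>)"
      proof -
        have "emeasure Unif {..c j + \<delta>} = emeasure lborel ({0..1} \<inter> {..c j + \<delta>})"
          unfolding Unif_def by (simp add: divide_ennreal_def)
        also have "\<dots> \<le> emeasure lborel {0..c j + \<delta>}" by (rule emeasure_mono) auto
        also have "\<dots> = ennreal (c j + \<delta>)" using cJ[OF j] a \<delta>0 by simp
        finally show ?thesis .
      qed
      have "(\<integral>\<^sup>+u. phi j g u \<partial>Unif) = emeasure Unif {c j<..} + ennreal (Lip g powr p) * emeasure Unif {..c j + \<delta>}"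
      proof -
        have sU: "sets Unif = sets borel" by (simp add: Unif_def)
        have A: "{c j<..} \<in> sets Unif" "{..c j + \<delta>} \<in> sets Unif" unfolding sU by auto
        have "(\<integral>\<^sup>+u. phi j g u \<partial>Unif) = (\<integral>\<^sup>+u. indicator {c j<..} u \<partial>Unif) + (\<integral>\<^sup>+u. ennreal (Lip g powr p) * indicator {..c j + \<delta>} u \<partial>Unif)"
          unfolding phi_def by (rule nn_integral_add) (use A in auto)
        also have "\<dots> = emeasure Unif {c j<..} + ennreal (Lip g powr p) * emeasure Unif {..c j + \<delta>}"
          using A by (simp add: nn_integral_cmult_indicator)
        finally show ?thesis .
      qed
      also have "\<dots> \<le> ennreal (1 - c j) + ennreal (Lip g powr p) * ennreal (c j + \<delta>)"
        using e1 e2 by (auto intro!: add_mono mult_left_mono)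
      finally show "(\<integral>\<^sup>+u. phi j g u \<partial>Unif) \<le> ennreal (1 - c j) + ennreal (Lip g powr p) * ennreal (c j + \<delta>)" .
    qed
    also have "\<dots> = ennreal (1 - c j) + ennreal \<Phi> * ennreal (c j + \<delta>)"
      using \<Phi>e by (subst nn_integral_add) (auto simp: nn_integral_multc N.emeasure_space_1 measurable_cong_sets[OF nu_sets refl])
    also have "\<dots> = ennreal ((1 - c j) + \<Phi> * (c j + \<delta>))"
    proof -
      have h: "0 \<le> 1 - c j" "0 \<le> c j + \<delta>" using cJ[OF j] a \<delta>0 by auto
      then have "0 \<le> \<Phi> * (c j + \<delta>)" using \<Phi>0 by simp
      then show ?thesis using h \<Phi>0 by (simp add: ennreal_mult ennreal_plus)
    qed
    also have "\<dots> \<le> ennreal r"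
    proof (rule ennreal_leI)
      have "a * (1 - \<Phi>) \<le> c j * (1 - \<Phi>)" using cJ[OF j] \<Phi>1 by (intro mult_right_mono) auto
      then show "(1 - c j) + \<Phi> * (c j + \<delta>) \<le> r" unfolding r_def by (simp add: algebra_simps)
    qed
    finally show ?thesis .
  qed
  define psi where "psi (k::nat) (j::nat) (i::nat) z = (if i < k then phi j (fst z) (snd z) else 1 + ennreal \<bar>fst z z0 - z0\<bar>)" for k j i z
  have psim[measurable]: "psi k j i \<in> borel_measurable (LipM \<Otimes>\<^sub>M borel)" for k j i
    unfolding psi_def by measurable
  have E2: "(\<integral>\<^sup>+\<omega>. 1 + ennreal \<bar>F k \<omega> z0 - z0\<bar> \<partial>M) = ennreal (1 + Cr)" for k
  proof -
    have m: "(\<lambda>z. 1 + ennreal \<bar>fst z z0 - z0\<bar>) \<in> borel_measurable (LipM \<Otimes>\<^sub>M borel)" by measurable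
    have "(\<integral>\<^sup>+\<omega>. 1 + ennreal \<bar>F k \<omega> z0 - z0\<bar> \<partial>M) = (\<integral>\<^sup>+g. \<integral>\<^sup>+u. 1 + ennreal \<bar>g z0 - z0\<bar> \<partial>Unif \<partial>\<nu>)"
      using transfer[OF m, of k] by simp
    also have "\<dots> = (\<integral>\<^sup>+g. 1 + ennreal \<bar>g z0 - z0\<bar> \<partial>\<nu>)"
      by (simp add: U.emeasure_space_1)
    also have "\<dots> = 1 + ennreal Cr"
      using Cre by (subst nn_integral_add) (auto simp: N.emeasure_space_1 measurable_cong_sets[OF nu_sets refl] meas_eval)
    also have "\<dots> = ennreal (1 + Cr)" using Cr0 by (simp add: ennreal_plus)
    finally show ?thesis .
  qed
  have E3: "(\<integral>\<^sup>+\<omega>. (\<Prod>i<k. phi j (F i \<omega>) (U i \<omega>)) * (1 + ennreal \<bar>F k \<omega> z0 - z0\<bar>) \<partial>M) \<le> ennreal (r ^ k * (1 + Cr))"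
    if j: "j \<in> J" for j k
  proof -
    have ind: "P.indep_vars (\<lambda>_. borel) (\<lambda>i \<omega>. psi k j i (F i \<omega>, U i \<omega>)) {..k}"
      by (rule P.indep_vars_compose2[OF P.indep_vars_subset[OF indep subset_UNIV]]) simp
    have "(\<integral>\<^sup>+\<omega>. (\<Prod>i<k. phi j (F i \<omega>) (U i \<omega>)) * (1 + ennreal \<bar>F k \<omega> z0 - z0\<bar>) \<partial>M)
        = (\<integral>\<^sup>+\<omega>. (\<Prod>i\<in>{..k}. psi k j i (F i \<omega>, U i \<omega>)) \<partial>M)"
    proof (rule nn_integral_cong)
      fix \<omega>
      have "(\<Prod>i\<in>{..k}. psi k j i (F i \<omega>, U i \<omega>)) = (\<Prod>i<k. psi k j i (F i \<omega>, U i \<omega>)) * psi k j k (F k \<omega>, U k \<omega>)"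
        by (simp add: lessThan_Suc_atMost[symmetric])
      also have "\<dots> = (\<Prod>i<k. phi j (F i \<omega>) (U i \<omega>)) * (1 + ennreal \<bar>F k \<omega> z0 - z0\<bar>)"
        by (simp add: psi_def)
      finally show "(\<Prod>i<k. phi j (F i \<omega>) (U i \<omega>)) * (1 + ennreal \<bar>F k \<omega> z0 - z0\<bar>) = (\<Prod>i\<in>{..k}. psi k j i (F i \<omega>, U i \<omega>))" by simp
    qed
    also have "\<dots> = (\<Prod>i\<in>{..k}. \<integral>\<^sup>+\<omega>. psi k j i (F i \<omega>, U i \<omega>) \<partial>M)"
      by (rule P.indep_vars_nn_integral[OF _ ind]) auto
    also have "\<dots> = (\<Prod>i<k. \<integral>\<^sup>+\<omega>. psi k j i (F i \<omega>, U i \<omega>) \<partial>M) * (\<integral>\<^sup>+\<omega>. psi k j k (F k \<omega>, U k \<omega>) \<partial>M)"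
      by (simp add: lessThan_Suc_atMost[symmetric])
    also have "\<dots> \<le> (\<Prod>i<k. ennreal r) * ennreal (1 + Cr)"
    proof (rule mult_mono)
      show "(\<Prod>i<k. \<integral>\<^sup>+\<omega>. psi k j i (F i \<omega>, U i \<omega>) \<partial>M) \<le> (\<Prod>i<k. ennreal r)"
        by (rule prod_mono_ennreal) (simp add: psi_def E1[OF j])
      show "(\<integral>\<^sup>+\<omega>. psi k j k (F k \<omega>, U k \<omega>) \<partial>M) \<le> ennreal (1 + Cr)"
        using E2[of k] by (simp add: psi_def)
    qed auto
    also have "\<dots> = ennreal (r ^ k * (1 + Cr))"
      using r0 Cr0 by (simp add: ennreal_mult ennreal_power)
    finally show ?thesis .
  qed
  define B where "B k \<omega> = (\<Sum>j\<in>J. (\<Prod>i<k. phi j (F i \<omega>) (U i \<omega>)) * (1 + ennreal \<bar>F k \<omega> z0 - z0\<bar>))" for k \<omega>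
  have phiM[measurable]: "(\<lambda>\<omega>. phi j (F i \<omega>) (U i \<omega>)) \<in> borel_measurable M" for i j
    using measurable_compose[OF Xm[of i] phim[of j]] by simp
  have Bm[measurable]: "B k \<in> borel_measurable M" for k
    unfolding B_def by measurable
  define K where "K = real (card J) * (1 + Cr)"
  have K0: "0 \<le> K" using Cr0 by (simp add: K_def)
  have E4: "(\<integral>\<^sup>+\<omega>. B k \<omega> \<partial>M) \<le> ennreal (K * r ^ k)" for k
  proof -
    have "(\<integral>\<^sup>+\<omega>. B k \<omega> \<partial>M) = (\<Sum>j\<in>J. \<integral>\<^sup>+\<omega>. (\<Prod>i<k. phi j (F i \<omega>) (U i \<omega>)) * (1 + ennreal \<bar>F k \<omega> z0 - z0\<bar>) \<partial>M)"
      unfolding B_def by (rule nn_integral_sum) (use phiM in simp)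
    also have "\<dots> \<le> (\<Sum>j\<in>J. ennreal (r ^ k * (1 + Cr)))"
      by (rule sum_mono) (rule E3)
    also have "\<dots> = ennreal (K * r ^ k)"
    proof -
      have "(\<Sum>j\<in>J. ennreal (r ^ k * (1 + Cr))) = of_nat (card J) * ennreal (r ^ k * (1 + Cr))" by simp
      also have "\<dots> = ennreal (real (card J)) * ennreal (r ^ k * (1 + Cr))" by (simp add: ennreal_of_nat_eq_real_of_nat)
      also have "\<dots> = ennreal (real (card J) * (r ^ k * (1 + Cr)))" using r0 Cr0 by (simp add: ennreal_mult)
      also have "real (card J) * (r ^ k * (1 + Cr)) = K * r ^ k" by (simp add: K_def mult_ac)
      finally show ?thesis .
    qed
    finally show ?thesis .
  qed
  have PW: "ennreal (\<bar>zeta_n F U z0 (Suc k) x \<omega> - zeta_n F U z0 k x \<omega>\<bar> powr p) \<le> B k \<omega>"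
    if \<omega>: "\<omega> \<in> space M" and x: "x \<in> {a..1}" for \<omega> x k
  proof -
    define g where "g = f_sel F U x \<omega>"
    define l where "l i = (if U i \<omega> \<le> x then Lip (F i \<omega>) else 1)" for i
    define D where "D = \<bar>F k \<omega> z0 - z0\<bar>"
    have D0: "0 \<le> D" by (simp add: D_def)
    have l0: "0 \<le> l i" for i using Lip_nonneg[OF Fin[OF \<omega>]] by (simp add: l_def)
    have gl: "\<bar>g i y - g i z\<bar> \<le> l i * \<bar>y - z\<bar>" for i y z
      using Lip_bound[OF Fin[OF \<omega>], of i y z] by (simp add: g_def l_def f_sel_def abs_minus_commute)
    have dk: "zeta_n F U z0 (Suc k) x \<omega> - zeta_n F U z0 k x \<omega> = iter_comp g k (g k z0) - iter_comp g k z0"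
      by (simp add: zeta_n_def g_def)
    have gD: "\<bar>g k z0 - z0\<bar> \<le> D" by (simp add: g_def f_sel_def D_def)
    have P0: "0 \<le> (\<Prod>i<k. l i)" using l0 by (simp add: prod_nonneg)
    have 1: "\<bar>zeta_n F U z0 (Suc k) x \<omega> - zeta_n F U z0 k x \<omega>\<bar> \<le> (\<Prod>i<k. l i) * D"
    proof -
      have "\<bar>iter_comp g k (g k z0) - iter_comp g k z0\<bar> \<le> (\<Prod>i<k. l i) * \<bar>g k z0 - z0\<bar>"
        by (rule iter_lip[OF gl l0])
      also have "\<dots> \<le> (\<Prod>i<k. l i) * D" by (rule mult_left_mono[OF gD P0])
      finally show ?thesis using dk by simp
    qed
    have 2: "\<bar>zeta_n F U z0 (Suc k) x \<omega> - zeta_n F U z0 k x \<omega>\<bar> powr p \<le> (\<Prod>i<k. l i powr p) * D powr p"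
    proof -
      have "\<bar>zeta_n F U z0 (Suc k) x \<omega> - zeta_n F U z0 k x \<omega>\<bar> powr p \<le> ((\<Prod>i<k. l i) * D) powr p"
        by (rule powr_mono2) (use 1 p in auto)
      also have "\<dots> = (\<Prod>i<k. l i) powr p * D powr p" using P0 D0 by (simp add: powr_mult)
      also have "\<dots> = (\<Prod>i<k. l i powr p) * D powr p" by (simp add: prod_powr_distrib)
      finally show ?thesis .
    qed
    have 3: "D powr p \<le> 1 + D"
    proof (cases "D \<le> 1")
      case True
      have "D powr p \<le> 1 powr p" by (rule powr_mono2) (use True D0 p in auto)
      then show ?thesis using D0 by simp
    next
      case False
      have "D powr p \<le> D powr 1" by (rule powr_mono) (use False p in auto)
      then show ?thesis using D0 by simp
    qed
    define j where "j = nat \<lfloor>(x - a) / \<delta>\<rfloor>"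
    have xa: "0 \<le> (x - a) / \<delta>" using x \<delta>0 by simp
    have jle: "real j \<le> (x - a) / \<delta>" unfolding j_def using xa by linarith
    have jgt: "(x - a) / \<delta> < real j + 1" unfolding j_def using xa by linarith
    have jJ: "j \<in> J"
    proof -
      have "real j * \<delta> \<le> x - a" using jle \<delta>0 by (simp add: le_divide_eq)
      then show ?thesis using x by (simp add: J_def)
    qed
    have cx: "c j \<le> x" using jle \<delta>0 by (simp add: c_def le_divide_eq algebra_simps)
    have xc: "x \<le> c j + \<delta>" using jgt \<delta>0 by (simp add: c_def divide_less_eq algebra_simps)
    have 4: "ennreal (l i powr p) \<le> phi j (F i \<omega>) (U i \<omega>)" for i
    proof -
      consider "U i \<omega> \<le> c j" | "c j < U i \<omega>" "U i \<omega> \<le> c j + \<delta>" | "c j + \<delta> < U i \<omega>" by linarith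
      then show ?thesis
      proof cases
        case 1
        then show ?thesis using cx \<delta>0 by (simp add: phi_def l_def indicator_def)
      next
        case 2
        then show ?thesis by (cases "U i \<omega> \<le> x") (auto simp: phi_def l_def indicator_def)
      next
        case 3
        then show ?thesis using xc cx \<delta>0 by (simp add: phi_def l_def indicator_def)
      qed
    qed
    have "ennreal (\<bar>zeta_n F U z0 (Suc k) x \<omega> - zeta_n F U z0 k x \<omega>\<bar> powr p) \<le> ennreal ((\<Prod>i<k. l i powr p) * (1 + D))"
    proof (rule ennreal_leI)
      have "(\<Prod>i<k. l i powr p) * D powr p \<le> (\<Prod>i<k. l i powr p) * (1 + D)"
        by (rule mult_left_mono[OF 3]) (simp add: prod_nonneg)
      then show "\<bar>zeta_n F U z0 (Suc k) x \<omega> - zeta_n F U z0 k x \<omega>\<bar> powr p \<le> (\<Prod>i<k. l i powr p) * (1 + D)"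
        using 2 by linarith
    qed
    also have "\<dots> = (\<Prod>i<k. ennreal (l i powr p)) * (1 + ennreal D)"
      using D0 by (simp add: ennreal_mult prod_nonneg prod_ennreal ennreal_plus)
    also have "\<dots> \<le> (\<Prod>i<k. phi j (F i \<omega>) (U i \<omega>)) * (1 + ennreal D)"
      by (rule mult_right_mono[OF prod_mono_ennreal[OF 4]]) simp
    also have "\<dots> \<le> B k \<omega>"
      unfolding B_def D_def by (rule member_le_sum[OF jJ _ finJ]) simp
    finally show ?thesis .
  qed
  define S where "S n \<omega> = (\<Sum>k. B (k + n) \<omega>)" for n \<omega>
  have Sm[measurable]: "S n \<in> borel_measurable M" for n
    unfolding S_def by measurable
  define T where "T n = K * r ^ n / (1 - r)" for n
  have Tsums: "(\<lambda>k. K * r ^ (k + n)) sums T n" for n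
  proof -
    have "(\<lambda>k. (K * r ^ n) * r ^ k) sums ((K * r ^ n) * (1 / (1 - r)))"
      by (rule sums_mult[OF geometric_sums]) (use r0 r1 in auto)
    moreover have "(\<lambda>k. (K * r ^ n) * r ^ k) = (\<lambda>k. K * r ^ (k + n))" by (simp add: power_add mult_ac)
    ultimately show ?thesis by (simp add: T_def)
  qed
  have ES: "(\<integral>\<^sup>+\<omega>. S n \<omega> \<partial>M) \<le> ennreal (T n)" for n
  proof -
    have "(\<integral>\<^sup>+\<omega>. S n \<omega> \<partial>M) = (\<Sum>k. \<integral>\<^sup>+\<omega>. B (k + n) \<omega> \<partial>M)"
      unfolding S_def by (rule nn_integral_suminf) simp
    also have "\<dots> \<le> (\<Sum>k. ennreal (K * r ^ (k + n)))"
      by (rule suminf_le[OF E4 summableI summableI])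
    also have "\<dots> = ennreal (\<Sum>k. K * r ^ (k + n))"
      by (rule suminf_ennreal2) (use K0 r0 Tsums in \<open>auto simp: sums_iff\<close>)
    also have "\<dots> = ennreal (T n)" using Tsums[of n] by (simp add: sums_iff)
    finally show ?thesis .
  qed
  define Nn where "Nn = S 0 -` {\<infinity>} \<inter> space M"
  have NnM: "Nn \<in> sets M" unfolding Nn_def by measurable
  have Nn0: "emeasure M Nn = 0"
    unfolding Nn_def by (rule nn_integral_PInf) (use ES[of 0] in \<open>auto simp: top_unique\<close>)
  have Z: "ennreal (\<bar>zeta F U z0 x \<omega> - zeta_n F U z0 n x \<omega>\<bar> powr p) \<le> S n \<omega>"
    if \<omega>: "\<omega> \<in> space M" "\<omega> \<notin> Nn" and x: "x \<in> {a..1}" for \<omega> x n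
  proof -
    have S0: "S 0 \<omega> \<noteq> \<infinity>" using \<omega> by (simp add: Nn_def)
    define b where "b k = enn2real (B k \<omega>)" for k
    have b0: "0 \<le> b k" for k by (simp add: b_def)
    have BS: "B k \<omega> \<le> S 0 \<omega>" for k
    proof -
      have "(\<Sum>i\<in>{k}. B i \<omega>) \<le> (\<Sum>i. B i \<omega>)" by (rule sum_le_suminf) auto
      then show ?thesis by (simp add: S_def)
    qed
    have Be: "B k \<omega> = ennreal (b k)" for k
    proof -
      have "B k \<omega> \<noteq> \<top>" using BS[of k] S0 by (auto simp: top_unique)
      then show ?thesis unfolding b_def by (intro ennreal_enn2real[symmetric]) (simp add: less_top[symmetric])
    qed
    have S0e: "S 0 \<omega> = (\<Sum>k. ennreal (b k))" by (simp add: S_def Be)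
    have bs: "summable b" by (rule summable_suminf_not_top[OF b0]) (use S0 S0e in simp)
    have Sn: "S n \<omega> = ennreal (\<Sum>k. b (k + n))"
      unfolding S_def Be by (rule suminf_ennreal2) (use b0 summable_ignore_initial_segment[OF bs] in auto)
    define d where "d k = zeta_n F U z0 (Suc k) x \<omega> - zeta_n F U z0 k x \<omega>" for k
    have db: "\<bar>d k\<bar> powr p \<le> b k" for k
      using PW[OF \<omega>(1) x, of k] b0[of k] by (simp add: d_def Be ennreal_le_iff)
    have "b \<longlonglongrightarrow> 0" by (rule summable_LIMSEQ_zero[OF bs])
    then have ev: "eventually (\<lambda>k. b k < 1) sequentially" by (rule order_tendstoD) simp
    have "eventually (\<lambda>k. norm (d k) \<le> b k) sequentially"
      using ev
    proof eventually_elim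
      case (elim k)
      have "\<bar>d k\<bar> < 1"
      proof (rule ccontr)
        assume "\<not> \<bar>d k\<bar> < 1"
        then have "1 \<le> \<bar>d k\<bar> powr p" using p by (intro ge_one_powr_ge_zero) auto
        then show False using db[of k] elim by linarith
      qed
      then have "\<bar>d k\<bar> \<le> \<bar>d k\<bar> powr p" using p by (intro powr_ge_self) auto
      then show ?case using db[of k] by simp
    qed
    then have ds: "summable d" by (rule summable_comparison_test_ev) (rule bs)
    have z0e: "zeta_n F U z0 0 x \<omega> = z0" by (simp add: zeta_n_def)
    have zn: "zeta_n F U z0 m x \<omega> = z0 + (\<Sum>k<m. d k)" for m
      unfolding d_def by (subst sum_lessThan_telescope) (simp add: z0e)
    have conv: "(\<lambda>m. zeta_n F U z0 m x \<omega>) \<longlonglongrightarrow> z0 + suminf d"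
      unfolding zn by (intro tendsto_add tendsto_const summable_LIMSEQ ds)
    have ze: "zeta F U z0 x \<omega> = z0 + suminf d"
      unfolding zeta_def using conv by (rule limI)
    have tail: "\<bar>zeta_n F U z0 m x \<omega> - zeta_n F U z0 n x \<omega>\<bar> powr p \<le> (\<Sum>k. b (k + n))" if mn: "n \<le> m" for m
    proof -
      have "zeta_n F U z0 m x \<omega> - zeta_n F U z0 n x \<omega> = (\<Sum>k\<in>{n..<m}. d k)"
      proof -
        have "(\<Sum>k<m. d k) = (\<Sum>k<n. d k) + (\<Sum>k\<in>{n..<m}. d k)"
          using mn by (simp add: atLeast0LessThan[symmetric] sum.atLeastLessThan_concat)
        then show ?thesis unfolding zn by simp
      qed
      then have "\<bar>zeta_n F U z0 m x \<omega> - zeta_n F U z0 n x \<omega>\<bar> powr p = \<bar>\<Sum>k\<in>{n..<m}. d k\<bar> powr p" by simp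
      also have "\<dots> \<le> (\<Sum>k\<in>{n..<m}. \<bar>d k\<bar>) powr p"
        by (rule powr_mono2) (use p in \<open>auto intro: sum_abs\<close>)
      also have "\<dots> \<le> (\<Sum>k\<in>{n..<m}. \<bar>d k\<bar> powr p)"
        by (rule powr_sum_le) (use p in auto)
      also have "\<dots> \<le> (\<Sum>k\<in>{n..<m}. b k)" by (rule sum_mono) (rule db)
      also have "\<dots> = (\<Sum>k\<in>{0..<m - n}. b (k + n))"
        using sum.shift_bounds_nat_ivl[of b 0 n "m - n"] mn by simp
      also have "\<dots> \<le> (\<Sum>k. b (k + n))"
        by (rule sum_le_suminf) (use b0 summable_ignore_initial_segment[OF bs] in auto)
      finally show ?thesis .
    qed
    have lim: "(\<lambda>m. \<bar>zeta_n F U z0 m x \<omega> - zeta_n F U z0 n x \<omega>\<bar> powr p) \<longlonglongrightarrow> \<bar>zeta F U z0 x \<omega> - zeta_n F U z0 n x \<omega>\<bar> powr p"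
      unfolding ze using p by (intro tendsto_powr' tendsto_rabs tendsto_diff conv tendsto_const) auto
    have "\<bar>zeta F U z0 x \<omega> - zeta_n F U z0 n x \<omega>\<bar> powr p \<le> (\<Sum>k. b (k + n))"
      by (rule tendsto_upperbound[OF lim]) (use tail in \<open>auto simp: eventually_at_top_linorder\<close>)
    then show ?thesis unfolding Sn by (rule ennreal_leI)
  qed
  define G where "G n \<omega> = (SUP x \<in> {a..1}. ennreal (\<bar>zeta F U z0 x \<omega> - zeta_n F U z0 n x \<omega>\<bar> powr p))" for n \<omega>
  have bound: "outer_nn_integral M (G n) \<le> ennreal (T n)" for n
  proof -
    define h where "h \<omega> = S n \<omega> + \<infinity> * indicator Nn \<omega>" for \<omega>
    have hm: "h \<in> borel_measurable M" unfolding h_def using NnM by measurable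
    have Gh: "\<forall>\<omega>\<in>space M. G n \<omega> \<le> h \<omega>"
    proof
      fix \<omega> assume \<omega>: "\<omega> \<in> space M"
      show "G n \<omega> \<le> h \<omega>"
      proof (cases "\<omega> \<in> Nn")
        case True
        then show ?thesis by (simp add: h_def)
      next
        case False
        have "G n \<omega> \<le> S n \<omega>" unfolding G_def by (rule SUP_least) (rule Z[OF \<omega> False])
        also have "\<dots> \<le> h \<omega>" by (simp add: h_def)
        finally show ?thesis .
      qed
    qed
    have "outer_nn_integral M (G n) \<le> integral\<^sup>N M h"
      unfolding outer_nn_integral_def by (rule INF_lower) (use hm Gh in auto)
    also have "integral\<^sup>N M h = (\<integral>\<^sup>+\<omega>. S n \<omega> \<partial>M) + \<infinity> * emeasure M Nn"
      unfolding h_def using NnM by (subst nn_integral_add) (auto simp: nn_integral_cmult_indicator)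
    also have "\<dots> = (\<integral>\<^sup>+\<omega>. S n \<omega> \<partial>M)" using Nn0 by simp
    also have "\<dots> \<le> ennreal (T n)" by (rule ES)
    finally show ?thesis .
  qed
  have Tlim: "(\<lambda>n. ennreal (T n)) \<longlonglongrightarrow> 0"
  proof -
    have "(\<lambda>n. K * r ^ n / (1 - r)) \<longlonglongrightarrow> K * 0 / (1 - r)"
      by (intro tendsto_divide tendsto_const tendsto_mult_left LIMSEQ_power_zero) (use r0 r1 in auto)
    then have "(\<lambda>n. ennreal (T n)) \<longlonglongrightarrow> ennreal 0" unfolding T_def by (intro tendsto_ennrealI) simp
    then show ?thesis by simp
  qed
  show ?thesis
    unfolding G_def[symmetric]
    by (rule tendsto_sandwich[OF _ _ tendsto_const Tlim]) (simp_all add: bound)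
qed
end
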